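(* Fix integers $n\ge 1$ and a real number $p\ge 1$. For $\mathbf{c}\in\mathbb{R}^n$ and $r>0$ let $\mathrm{ball}(\mathbf{c},r)=\{\mathbf{x}\in\mathbb{R}^n:\|\mathbf{x}-\mathbf{c}\|\le r\}$, and let $\mathcal{B}^n$ be the set of all such balls, equipped with the depth dissimilarity $$d_{\mathrm{dep}}(\mathrm{ball}(\mathbf{c}_1,r_1),\mathrm{ball}(\mathbf{c}_2,r_2))=\frac{\|\mathbf{c}_1-\mathbf{c}_2\|_p^p+|r_1-r_2|^p}{r_1\, r_2}.$$ Then: (1) For any $B_1,B_2\in\mathcal{B}^n$ and any $\Delta>0$ there exists $r_0>0$ such that for every ball $\mathrm{ball}(\mathbf{c}',r')\subseteq B_2$ with $r'\le r_0$, $$d_{\mathrm{dep}}(B_1,\mathrm{ball}(\mathbf{c}',r'))>d_{\mathrm{dep}}(B_1,B_2)+\Delta.$$ (2) For any $B\in\mathcal{B}^n$, any positive integer $N$ and any $M>0$, there exist balls $B_1,\dots,B_N\in\mathcal{B}^n$ with $B_i\subseteq B$ for all $i$, such that $d_{\mathrm{dep}}(B_i,B_j)>M$ for all distinct $i,j\in\{1,\dots,N\}$. The same conclusions hold for boxes: for $\mathbf{c}\in\mathbb{R}^n$ and $\mathbf{o}\in(\mathbb{R}_{>0})^n$ let $\mathrm{box}(\mathbf{c},\mathbf{o})=\{\mathbf{x}\in\mathbb{R}^n:\mathbf{c}-\mathbf{o}\le\mathbf{x}\le\mathbf{c}+\mathbf{o}\}$ (componentwise inequalities), with depth dissimilarity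 $$d_{\mathrm{dep}}(\mathrm{box}(\mathbf{c}_1,\mathbf{o}_1),\mathrm{box}(\mathbf{c}_2,\mathbf{o}_2))=\frac{\|\mathbf{c}_1-\mathbf{c}_2\|_p^p+\|\mathbf{o}_1-\mathbf{o}_2\|_p^p}{\|\mathbf{o}_1\|\,\|\mathbf{o}_2\|};$$ then (1) holds with "there exists $r_0>0$" replaced by "there exists $\mathbf{o}_0\in(\mathbb{R}_{>0})^n$" and the condition $r'\le r_0$ replaced by $\mathbf{o}'\le\mathbf{o}_0$ componentwise for boxes $\mathrm{box}(\mathbf{c}',\mathbf{o}')\subseteq B_2$, and (2) holds with balls replaced by boxes throughout.
   Context: $\|\cdot\|_p$ denotes the $p$-norm, $\|\mathbf{x}\|_p=(\sum_i|x_i|^p)^{1/p}$; $\|\cdot\|$ without subscript denotes the Euclidean norm. *)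

theory Defs
  imports "HOL-Analysis.Analysis"
begin

definition pnorm_pow :: "real \<Rightarrow> real ^ 'n \<Rightarrow> real" where
  "pnorm_pow p x = (\<Sum>i\<in>UNIV. \<bar>x $ i\<bar> powr p)"

definition ballset :: "real ^ 'n \<Rightarrow> real \<Rightarrow> (real ^ 'n) set" where
  "ballset c r = {x. norm (x - c) \<le> r}"

definition boxset :: "real ^ 'n \<Rightarrow> real ^ 'n \<Rightarrow> (real ^ 'n) set" where
  "boxset c w = {x. \<forall>i. c $ i - w $ i \<le> x $ i \<and> x $ i \<le> c $ i + w $ i}"

definition pos_vec :: "real ^ 'n \<Rightarrow> bool" where
  "pos_vec w \<longleftrightarrow> (\<forall>i. w $ i > 0)"

definition dep_ball :: "real \<Rightarrow> real ^ 'n \<Rightarrow> real \<Rightarrow> real ^ 'n \<Rightarrow> real \<Rightarrow> real" where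
  "dep_ball p c1 r1 c2 r2 = (pnorm_pow p (c1 - c2) + \<bar>r1 - r2\<bar> powr p) / (r1 * r2)"

definition dep_box :: "real \<Rightarrow> real ^ 'n \<Rightarrow> real ^ 'n \<Rightarrow> real ^ 'n \<Rightarrow> real ^ 'n \<Rightarrow> real" where
  "dep_box p c1 w1 c2 w2 = (pnorm_pow p (c1 - c2) + pnorm_pow p (w1 - w2)) / (norm w1 * norm w2)"

end

theory Submission imports Defs begin

lemma pnorm_nonneg: "pnorm_pow p x \<ge> 0"
  unfolding pnorm_pow_def by (simp add: sum_nonneg)

lemma pnorm_ge: "\<bar>x $ k\<bar> powr p \<le> pnorm_pow p x"
  unfolding pnorm_pow_def by (rule member_le_sum) auto

lemma pnorm_axis: "pnorm_pow p ((s::real) *\<^sub>R axis k (1::real)) = \<bar>s\<bar> powr p"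
proof -
  have "pnorm_pow p (s *\<^sub>R axis k (1::real)) = (\<Sum>i\<in>UNIV. if i = k then \<bar>s\<bar> powr p else 0)"
    unfolding pnorm_pow_def by (rule sum.cong) (auto simp: axis_def)
  also have "\<dots> = \<bar>s\<bar> powr p" by simp
  finally show ?thesis .
qed

lemma pnorm_zero: "pnorm_pow p 0 = 0"
  unfolding pnorm_pow_def by simp

lemma big_bound:
  fixes A B X s N :: real
  assumes "A > 0" "B > 0" "X > 0" "s > 0" "s \<le> A / (B * X)" "N \<ge> A"
  shows "N / (B * s) \<ge> X"
proof -
  have "s * (B * X) \<le> A" using assms by (simp add: field_simps)
  hence "X * (B * s) \<le> N" using assms by (simp add: algebra_simps)
  thus ?thesis using assms by (simp add: field_simps)
qed

lemma part1:
  fixes c1 c2 :: "real^'n"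
  assumes p: "p \<ge> 1" and "r1 > 0" "r2 > 0" "\<Delta> > 0"
  shows "\<exists>r0 > 0. \<forall>c' r'. r' > 0 \<longrightarrow> ballset c' r' \<subseteq> ballset c2 r2 \<longrightarrow> r' \<le> r0 \<longrightarrow>
          dep_ball p c1 r1 c' r' > dep_ball p c1 r1 c2 r2 + \<Delta>"
proof -
  define D where "D = dep_ball p c1 r1 c2 r2"
  define a where "a = r1 / 2"
  define X where "X = \<bar>D\<bar> + \<Delta> + 1"
  define r0 where "r0 = min a (a powr p / (r1 * X))"
  have a: "a > 0" using assms a_def by simp
  have X: "X > 0" using assms X_def by simp
  have "r0 > 0" unfolding r0_def using a X assms by simp
  moreover have "dep_ball p c1 r1 c' r' > D + \<Delta>" if r': "r' > 0" "r' \<le> r0" for c' r'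
  proof -
    have "r' \<le> a" using r' r0_def by simp
    hence "a \<le> \<bar>r1 - r'\<bar>" using a_def by simp
    hence "a powr p \<le> \<bar>r1 - r'\<bar> powr p" using a p by (intro powr_mono2) auto
    hence N: "a powr p \<le> pnorm_pow p (c1 - c') + \<bar>r1 - r'\<bar> powr p"
      using pnorm_nonneg[of p "c1 - c'"] by linarith
    have "X \<le> (pnorm_pow p (c1 - c') + \<bar>r1 - r'\<bar> powr p) / (r1 * r')"
      using big_bound[where A="a powr p" and B=r1 and X=X and s=r'] a X assms r' N
      by (simp add: r0_def)
    thus ?thesis unfolding dep_ball_def X_def by linarith
  qed
  ultimately show ?thesis unfolding D_def by blast
qed

lemma part2:
  fixes c :: "real^'n" and N :: nat and r M p :: real
  assumes p: "p \<ge> 1" and r: "r > 0" and N: "N \<ge> 1" and M: "M > 0"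
  shows "\<exists>cs rs. (\<forall>i\<in>{1..N}. rs i > 0 \<and> ballset (cs i) (rs i) \<subseteq> ballset c r) \<and>
        (\<forall>i\<in>{1..N}. \<forall>j\<in>{1..N}. i \<noteq> j \<longrightarrow> dep_ball p (cs i) (rs i) (cs j) (rs j) > M)"
proof -
  obtain k :: 'n where True by blast
  define h where "h = r / (2 * real N)"
  define \<rho> where "\<rho> = min (r/2) (min 1 (h powr p / (2 * M)))"
  define cs where "cs = (\<lambda>i::nat. c + (real i * h) *\<^sub>R axis k (1::real))"
  have h: "h > 0" using r N h_def by simp
  have rho: "\<rho> > 0" using r h M \<rho>_def by simp
  have Nh: "real N * h = r / 2" using N h_def by simp
  have cont: "ballset (cs i) \<rho> \<subseteq> ballset c r" if i: "i \<in> {1..N}" for i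
  proof
    fix x assume "x \<in> ballset (cs i) \<rho>"
    hence x: "norm (x - cs i) \<le> \<rho>" by (simp add: ballset_def)
    have "x - c = (x - cs i) + (real i * h) *\<^sub>R axis k (1::real)" by (simp add: cs_def)
    hence "norm (x - c) \<le> norm (x - cs i) + norm ((real i * h) *\<^sub>R axis k (1::real))"
      by (metis norm_triangle_ineq)
    also have "norm ((real i * h) *\<^sub>R axis k (1::real)) = real i * h" using h by simp
    also have "real i * h \<le> real N * h" using i h by (intro mult_right_mono) auto
    finally have "norm (x - c) \<le> \<rho> + r/2" using x Nh by linarith
    thus "x \<in> ballset c r" using \<rho>_def by (simp add: ballset_def)
  qed
  have dep: "dep_ball p (cs i) \<rho> (cs j) \<rho> > M" if ij: "i \<noteq> j" for i j
  proof -
    have "cs i - cs j = (real i * h - real j * h) *\<^sub>R axis k (1::real)"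
      by (simp add: cs_def algebra_simps)
    hence eq: "dep_ball p (cs i) \<rho> (cs j) \<rho> = \<bar>real i * h - real j * h\<bar> powr p / (\<rho> * \<rho>)"
      by (simp add: dep_ball_def pnorm_axis)
    have "\<bar>real i * h - real j * h\<bar> = \<bar>real i - real j\<bar> * h" using h
      by (simp add: left_diff_distrib[symmetric] abs_mult)
    moreover have "\<bar>real i - real j\<bar> \<ge> 1" using ij by linarith
    ultimately have "\<bar>real i * h - real j * h\<bar> \<ge> h" using h
      by (metis mult_le_cancel_right1 less_le_not_le)
    hence A: "h powr p \<le> \<bar>real i * h - real j * h\<bar> powr p" using h p by (intro powr_mono2) auto
    have "\<rho> \<le> 1" using \<rho>_def by simp
    hence "\<rho> * \<rho> \<le> \<rho>" using rho by (intro mult_right_le_one_le) auto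
    also have "\<rho> \<le> h powr p / (2 * M)" using \<rho>_def by simp
    finally have "M * (\<rho> * \<rho>) \<le> h powr p / 2" using M by (simp add: field_simps)
    hence "M * (\<rho> * \<rho>) < \<bar>real i * h - real j * h\<bar> powr p"
    proof -
      have "h powr p > 0" using h by simp
      thus ?thesis using A \<open>M * (\<rho> * \<rho>) \<le> h powr p / 2\<close> by linarith
    qed
    thus ?thesis unfolding eq using rho by (simp add: pos_less_divide_eq)
  qed
  show ?thesis
    by (rule exI[of _ cs], rule exI[of _ "\<lambda>_. \<rho>"]) (use cont dep rho in auto)
qed

lemma part3:
  fixes c1 w1 c2 w2 :: "real^'n" and p \<Delta> :: real
  assumes p: "p \<ge> 1" and w1: "pos_vec w1" and "pos_vec w2" and D: "\<Delta> > 0"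
  shows "\<exists>w0. pos_vec w0 \<and> (\<forall>c' w'. pos_vec w' \<longrightarrow> boxset c' w' \<subseteq> boxset c2 w2 \<longrightarrow>
          (\<forall>i. w' $ i \<le> w0 $ i) \<longrightarrow>
          dep_box p c1 w1 c' w' > dep_box p c1 w1 c2 w2 + \<Delta>)"
proof -
  obtain k :: 'n where True by blast
  define K where "K = norm (1::real^'n)"
  define D where "D = dep_box p c1 w1 c2 w2"
  define X where "X = \<bar>D\<bar> + \<Delta> + 1"
  define a where "a = w1 $ k / 2"
  define B where "B = norm w1"
  define t where "t = min a (a powr p / (B * K * X))"
  have K: "K > 0" unfolding K_def by simp
  have X: "X > 0" using D X_def by simp
  have a: "a > 0" using w1 a_def unfolding pos_vec_def by (metis half_gt_zero)
  have "w1 \<noteq> 0" using w1 unfolding pos_vec_def by (metis less_irrefl zero_index)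
  hence B: "B > 0" using B_def by simp
  have t: "t > 0" using a K X B t_def by simp
  have pw0: "pos_vec (t *\<^sub>R (1::real^'n))" using t by (simp add: pos_vec_def)
  moreover have "dep_box p c1 w1 c' w' > D + \<Delta>"
    if w': "pos_vec w'" "\<forall>i. w' $ i \<le> (t *\<^sub>R (1::real^'n)) $ i" for c' w'
  proof -
    have "w' \<noteq> 0" using w' unfolding pos_vec_def by (metis less_irrefl zero_index)
    hence nw: "norm w' > 0" by simp
    have "norm w' \<le> norm (t *\<^sub>R (1::real^'n))"
      by (rule norm_le_componentwise_cart) (use w' t in \<open>auto simp: pos_vec_def less_imp_le\<close>)
    also have "\<dots> = t * K" using t K_def by simp
    also have "\<dots> \<le> (a powr p / (B * K * X)) * K" using K t_def by (intro mult_right_mono) auto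
    also have "\<dots> = a powr p / (B * X)" using K by (simp add: field_simps)
    finally have le: "norm w' \<le> a powr p / (B * X)" .
    have "w' $ k \<le> a" using w'(2) t_def by simp
    hence "a \<le> \<bar>(w1 - w') $ k\<bar>" using a_def by simp
    hence "a powr p \<le> \<bar>(w1 - w') $ k\<bar> powr p" using a p by (intro powr_mono2) auto
    also have "\<dots> \<le> pnorm_pow p (w1 - w')" by (rule pnorm_ge)
    finally have N: "a powr p \<le> pnorm_pow p (c1 - c') + pnorm_pow p (w1 - w')"
      using pnorm_nonneg[of p "c1 - c'"] by linarith
    have "X \<le> (pnorm_pow p (c1 - c') + pnorm_pow p (w1 - w')) / (B * norm w')"
      using big_bound[where A="a powr p" and B=B and X=X and s="norm w'"] a X B nw le N
      by simp
    thus ?thesis unfolding dep_box_def X_def B_def by linarith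
  qed
  ultimately show ?thesis unfolding D_def by blast
qed

lemma part4:
  fixes c w :: "real^'n" and N :: nat and M p :: real
  assumes p: "p \<ge> 1" and w: "pos_vec w" and N: "N \<ge> 1" and M: "M > 0"
  shows "\<exists>cs ws. (\<forall>i\<in>{1..N}. pos_vec (ws i) \<and> boxset (cs i) (ws i) \<subseteq> boxset c w) \<and>
        (\<forall>i\<in>{1..N}. \<forall>j\<in>{1..N}. i \<noteq> j \<longrightarrow> dep_box p (cs i) (ws i) (cs j) (ws j) > M)"
proof -
  obtain k :: 'n where True by blast
  define K where "K = norm (1::real^'n)"
  define m where "m = Min (range (\<lambda>l. w $ l))"
  have K: "K > 0" unfolding K_def by simp
  have mle: "m \<le> w $ l" for l unfolding m_def by (rule Min_le) auto
  have "m \<in> range (\<lambda>l. w $ l)" unfolding m_def by (rule Min_in) auto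
  hence m: "m > 0" using w by (auto simp: pos_vec_def)
  define h where "h = m / (2 * real N)"
  define \<rho> where "\<rho> = min (m/2) (min 1 (h powr p / (2 * M * K * K)))"
  define cs where "cs = (\<lambda>i::nat. c + (real i * h) *\<^sub>R axis k (1::real))"
  define ws where "ws = (\<lambda>i::nat. \<rho> *\<^sub>R (1::real^'n))"
  have h: "h > 0" using m N h_def by simp
  have rho: "\<rho> > 0" using m h M K \<rho>_def by simp
  have Nh: "real N * h = m / 2" using N h_def by simp
  have cont: "boxset (cs i) (ws i) \<subseteq> boxset c w" if i: "i \<in> {1..N}" for i
  proof
    fix x assume "x \<in> boxset (cs i) (ws i)"
    hence x: "\<And>l. c $ l + real i * h * axis k 1 $ l - \<rho> \<le> x $ l \<and> x $ l \<le> c $ l + real i * h * axis k 1 $ l + \<rho>"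
      by (simp add: boxset_def cs_def ws_def)
    have ih: "0 \<le> real i * h" "real i * h \<le> m / 2"
    proof -
      show "0 \<le> real i * h" using h by simp
      have "real i * h \<le> real N * h" using i h by (intro mult_right_mono) auto
      thus "real i * h \<le> m / 2" using Nh by linarith
    qed
    have rm: "\<rho> \<le> m/2" using \<rho>_def by simp
    show "x \<in> boxset c w" unfolding boxset_def
    proof (intro CollectI allI conjI)
      fix l
      have ax: "0 \<le> axis k (1::real) $ l \<and> axis k (1::real) $ l \<le> 1" by (simp add: axis_def)
      have "0 \<le> real i * h * axis k 1 $ l" using ih ax by simp
      moreover have "real i * h * axis k 1 $ l \<le> m / 2"
      proof -
        have "real i * h * axis k 1 $ l \<le> real i * h * 1" using ih ax by (intro mult_left_mono) auto
        thus ?thesis using ih by linarith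
      qed
      ultimately show "c $ l - w $ l \<le> x $ l" "x $ l \<le> c $ l + w $ l"
        using x[of l] mle[of l] rm by linarith+
    qed
  qed
  have dep: "dep_box p (cs i) (ws i) (cs j) (ws j) > M" if ij: "i \<noteq> j" for i j
  proof -
    have "cs i - cs j = (real i * h - real j * h) *\<^sub>R axis k (1::real)"
      by (simp add: cs_def algebra_simps)
    hence e1: "pnorm_pow p (cs i - cs j) = \<bar>real i * h - real j * h\<bar> powr p"
      by (simp only: pnorm_axis)
    have e2: "norm (ws l) = \<rho> * K" for l using rho by (simp add: ws_def K_def)
    have e3: "ws i - ws j = 0" by (simp add: ws_def)
    have eq: "dep_box p (cs i) (ws i) (cs j) (ws j) = \<bar>real i * h - real j * h\<bar> powr p / (\<rho> * \<rho> * (K * K))"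
      unfolding dep_box_def e1 e2 e3 pnorm_zero by (simp add: mult_ac)
    have "\<bar>real i * h - real j * h\<bar> = \<bar>real i - real j\<bar> * h" using h
      by (simp add: left_diff_distrib[symmetric] abs_mult)
    moreover have "\<bar>real i - real j\<bar> \<ge> 1" using ij by linarith
    ultimately have "\<bar>real i * h - real j * h\<bar> \<ge> h" using h
      by (metis mult_le_cancel_right1 less_le_not_le)
    hence A: "h powr p \<le> \<bar>real i * h - real j * h\<bar> powr p" using h p by (intro powr_mono2) auto
    have "\<rho> \<le> 1" using \<rho>_def by simp
    hence "\<rho> * \<rho> \<le> \<rho>" using rho by (intro mult_right_le_one_le) auto
    also have "\<rho> \<le> h powr p / (2 * M * K * K)" using \<rho>_def by simp
    finally have "\<rho> * \<rho> \<le> h powr p / (2 * M * K * K)" .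
    hence "M * (\<rho> * \<rho> * (K * K)) \<le> h powr p / 2" using M K by (simp add: field_simps)
    hence "M * (\<rho> * \<rho> * (K * K)) < \<bar>real i * h - real j * h\<bar> powr p"
    proof -
      have "h powr p > 0" using h by simp
      thus ?thesis using A \<open>M * (\<rho> * \<rho> * (K * K)) \<le> h powr p / 2\<close> by linarith
    qed
    thus ?thesis unfolding eq using rho K by (simp add: pos_less_divide_eq)
  qed
  have pw: "pos_vec (ws i)" for i using rho by (simp add: ws_def pos_vec_def)
  show ?thesis
    by (rule exI[of _ cs], rule exI[of _ ws]) (use cont dep pw in auto)
qed

theorem theorem1:
  fixes p :: real
  assumes "p \<ge> 1"
  shows
   "(\<forall>(c1::real^'n) r1 c2 r2 \<Delta>. r1 > 0 \<longrightarrow> r2 > 0 \<longrightarrow> \<Delta> > 0 \<longrightarrow>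
      (\<exists>r0 > 0. \<forall>c' r'. r' > 0 \<longrightarrow> ballset c' r' \<subseteq> ballset c2 r2 \<longrightarrow> r' \<le> r0 \<longrightarrow>
          dep_ball p c1 r1 c' r' > dep_ball p c1 r1 c2 r2 + \<Delta>))
  \<and> (\<forall>(c::real^'n) r (N::nat) M. r > 0 \<longrightarrow> N \<ge> 1 \<longrightarrow> M > 0 \<longrightarrow>
      (\<exists>cs rs. (\<forall>i\<in>{1..N}. rs i > 0 \<and> ballset (cs i) (rs i) \<subseteq> ballset c r) \<and>
        (\<forall>i\<in>{1..N}. \<forall>j\<in>{1..N}. i \<noteq> j \<longrightarrow> dep_ball p (cs i) (rs i) (cs j) (rs j) > M)))
  \<and> (\<forall>(c1::real^'n) w1 c2 w2 \<Delta>. pos_vec w1 \<longrightarrow> pos_vec w2 \<longrightarrow> \<Delta> > 0 \<longrightarrow>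
      (\<exists>w0. pos_vec w0 \<and> (\<forall>c' w'. pos_vec w' \<longrightarrow> boxset c' w' \<subseteq> boxset c2 w2 \<longrightarrow>
          (\<forall>i. w' $ i \<le> w0 $ i) \<longrightarrow>
          dep_box p c1 w1 c' w' > dep_box p c1 w1 c2 w2 + \<Delta>)))
  \<and> (\<forall>(c::real^'n) w (N::nat) M. pos_vec w \<longrightarrow> N \<ge> 1 \<longrightarrow> M > 0 \<longrightarrow>
      (\<exists>cs ws. (\<forall>i\<in>{1..N}. pos_vec (ws i) \<and> boxset (cs i) (ws i) \<subseteq> boxset c w) \<and>
        (\<forall>i\<in>{1..N}. \<forall>j\<in>{1..N}. i \<noteq> j \<longrightarrow> dep_box p (cs i) (ws i) (cs j) (ws j) > M)))"
  apply (intro conjI allI impI)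
     apply (rule part1[OF assms]; assumption)
    apply (rule part2[OF assms]; assumption)
   apply (rule part3[OF assms]; assumption)
  apply (rule part4[OF assms]; assumption)
  done

end
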